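(* Assume the standing assumptions (A) below. Let $g\in L^{\infty}(\Gamma_-)$ satisfy $\underline g:=\inf_{\Gamma_-} g>0$, let $\Sigma_a\in\mathcal{F}_{\underline\Sigma_a}^{\overline\Sigma_a}(\Omega)$ for some constants $\underline\Sigma_a,\overline\Sigma_a$, and let $u$ be the unique solution of the linear transport equation \[ \mathbf v\cdot\nabla u+(\Sigma_a+\sigma_s)u=\sigma_s K u \ \text{ in } X,\qquad u=g \ \text{ on } \Gamma_- . \] Then there exists a constant $\mathfrak c>0$ such that $u\ge \mathfrak c>0$.
   Context: Let $d\ge 2$, $\Omega\subset\mathbb R^d$ a domain with boundary $\partial\Omega$ and unit outer normal $\boldsymbol\nu(\mathbf x)$, $\mathbb S^{d-1}$ the unit sphere equipped with the normalized surface measure $d\mathbf v$, $X:=\Omega\times\mathbb S^{d-1}$, and $\Gamma_-:=\{(\mathbf x,\mathbf v)\in\partial\Omega\times\mathbb S^{d-1}: -\boldsymbol\nu(\mathbf x)\cdot\mathbf v>0\}$. The scattering operator is $Ku(\mathbf x,\mathbf v):=\int_{\mathbb S^{d-1}}\Theta(\mathbf v,\mathbf v')u(\mathbf x,\mathbf v')\,d\mathbf v'$ with $\Theta$ symmetric and $\int_{\mathbb S^{d-1}}\Theta(\mathbf v,\mathbf v')d\mathbf v'=\int_{\mathbb S^{d-1}}\Theta(\mathbf v,\mathbf v')d\mathbf v=1$. $L^p(\Gamma_-)$ is the space with norm $(\int_{\partial\Omega}\int_{\{\mathbf v:-\boldsymbol\nu(\mathbf x)\cdot \mathbf v>0\}}|\boldsymbol\nu(\mathbf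 x)\cdot\mathbf v||f|^p d\mathbf v\,d\gamma)^{1/p}$. For a set $Y$ and constants $0<\underline f\le \overline f<\infty$, $\mathcal F_{\underline f}^{\overline f}(Y):=\{f\in L^\infty(Y): \underline f\le f\le\overline f \text{ a.e.}\}$. Standing assumption (A): (i) $\Omega$ is bounded, convex and smooth; (ii) $\sigma_s\in\mathcal F_{\underline\sigma_s}^{\overline\sigma_s}(\Omega)$ for some constants $\underline\sigma_s,\overline\sigma_s$; (iii) $\Theta\in\mathcal F_{\underline\theta}^{\overline\theta}(\mathbb S^{d-1}\times\mathbb S^{d-1})$ for some constants $\underline\theta,\overline\theta$. *)

theory Defs
  imports "HOL-Analysis.Analysis" "HOL-Probability.Probability"
begin

fun pderivs :: "'a::euclidean_space list \<Rightarrow> ('a \<Rightarrow> real) \<Rightarrow> 'a \<Rightarrow> real" where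
  "pderivs [] f = f"
| "pderivs (b # bs) f = (\<lambda>x. deriv (\<lambda>t. pderivs bs f (x + t *\<^sub>R b)) 0)"

definition smooth_fun :: "('a::euclidean_space \<Rightarrow> real) \<Rightarrow> bool" where
  "smooth_fun f \<longleftrightarrow> (\<forall>bs. set bs \<subseteq> Basis \<longrightarrow>
      continuous_on UNIV (pderivs bs f) \<and>
      (\<forall>b\<in>Basis. \<forall>x. (\<lambda>t. pderivs bs f (x + t *\<^sub>R b)) differentiable (at 0)))"

definition grad :: "('a::euclidean_space \<Rightarrow> real) \<Rightarrow> 'a \<Rightarrow> 'a" where
  "grad f x = (\<Sum>b\<in>Basis. frechet_derivative f (at x) b *\<^sub>R b)"

definition defining_function :: "'a::euclidean_space set \<Rightarrow> ('a \<Rightarrow> real) \<Rightarrow> bool" where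
  "defining_function \<Omega> \<rho> \<longleftrightarrow> smooth_fun \<rho> \<and> \<Omega> = {x. \<rho> x < 0} \<and>
      (\<forall>x. \<rho> x = 0 \<longrightarrow> grad \<rho> x \<noteq> 0)"

definition smooth_domain :: "'a::euclidean_space set \<Rightarrow> bool" where
  "smooth_domain \<Omega> \<longleftrightarrow> (\<exists>\<rho>. defining_function \<Omega> \<rho>)"

text \<open>Unit outer normal (independent of the choice of defining function).\<close>
definition outer_normal :: "'a::euclidean_space set \<Rightarrow> 'a \<Rightarrow> 'a" where
  "outer_normal \<Omega> y = (let \<rho> = (SOME \<rho>. defining_function \<Omega> \<rho>) in grad \<rho> y /\<^sub>R norm (grad \<rho> y))"

text \<open>Normalized surface measure on the unit sphere, realised as the cone measure
  (push-forward of the uniform probability on the unit ball under x / |x|).\<close>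
definition sphere_measure :: "'a::euclidean_space measure" where
  "sphere_measure = distr (uniform_measure lborel (ball 0 1)) borel (\<lambda>x. x /\<^sub>R norm x)"

definition Gamma_minus :: "'a::euclidean_space set \<Rightarrow> ('a \<times> 'a) set" where
  "Gamma_minus \<Omega> = {(y, v). y \<in> frontier \<Omega> \<and> v \<in> sphere 0 1 \<and> - (outer_normal \<Omega> y \<bullet> v) > 0}"

definition in_F :: "'b measure \<Rightarrow> 'b set \<Rightarrow> real \<Rightarrow> real \<Rightarrow> ('b \<Rightarrow> real) \<Rightarrow> bool" where
  "in_F M Y lo hi f \<longleftrightarrow> 0 < lo \<and> lo \<le> hi \<and> f \<in> borel_measurable M \<and>
      (AE y in M. y \<in> Y \<longrightarrow> lo \<le> f y \<and> f y \<le> hi)"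

definition scat_op :: "('a::euclidean_space \<Rightarrow> 'a \<Rightarrow> real) \<Rightarrow> ('a \<Rightarrow> 'a \<Rightarrow> real) \<Rightarrow> 'a \<Rightarrow> 'a \<Rightarrow> real" where
  "scat_op \<Theta> u x v = (\<integral>v'. \<Theta> v v' * u x v' \<partial>sphere_measure)"

definition tau_minus :: "'a::euclidean_space set \<Rightarrow> 'a \<Rightarrow> 'a \<Rightarrow> real" where
  "tau_minus \<Omega> x v = Sup {t. 0 \<le> t \<and> x - t *\<^sub>R v \<in> \<Omega>}"

text \<open>Solution of  v.grad u + (Sa + ss) u = ss K u  in X,  u = g on Gamma_-,
  in the (equivalent) integral form along characteristics.\<close>
definition is_transport_solution ::
  "'a::euclidean_space set \<Rightarrow> ('a \<Rightarrow> real) \<Rightarrow> ('a \<Rightarrow> real) \<Rightarrow> ('a \<Rightarrow> 'a \<Rightarrow> real)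
    \<Rightarrow> ('a \<Rightarrow> 'a \<Rightarrow> real) \<Rightarrow> ('a \<Rightarrow> 'a \<Rightarrow> real) \<Rightarrow> bool" where
  "is_transport_solution \<Omega> \<Sigma>a \<sigma>s \<Theta> g u \<longleftrightarrow>
     (\<lambda>(x, v). u x v) \<in> borel_measurable (lborel \<Otimes>\<^sub>M sphere_measure) \<and>
     (\<exists>B. AE (x, v) in lborel \<Otimes>\<^sub>M sphere_measure. x \<in> \<Omega> \<longrightarrow> \<bar>u x v\<bar> \<le> B) \<and>
     (AE (x, v) in lborel \<Otimes>\<^sub>M sphere_measure. x \<in> \<Omega> \<longrightarrow>
        (let \<tau> = tau_minus \<Omega> x v;
             att = (\<lambda>t. exp (- (LINT s:{0..t}|lborel. \<Sigma>a (x - s *\<^sub>R v) + \<sigma>s (x - s *\<^sub>R v))))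
         in u x v = att \<tau> * g (x - \<tau> *\<^sub>R v) v
               + (LINT t:{0..\<tau>}|lborel. att t * \<sigma>s (x - t *\<^sub>R v) * scat_op \<Theta> u (x - t *\<^sub>R v) v)))"

end

theory Submission
  imports Defs
begin

lemma sets_sphere_measure[measurable_cong, simp]: "sets sphere_measure = sets borel"
  by (simp add: sphere_measure_def)

lemma space_sphere_measure[simp]: "space sphere_measure = UNIV"
  by (simp add: sphere_measure_def)

lemma ball_meas_pos: "emeasure lborel (ball (0::'a::euclidean_space) 1) \<noteq> 0"
proof
  assume "emeasure lborel (ball (0::'a::euclidean_space) 1) = 0"
  then have "measure lborel (ball (0::'a) 1) = 0" by (simp add: measure_def)
  then show False using content_ball_pos[of 1 "0::'a"] by simp
qed

lemma prob_space_sphere: "prob_space (sphere_measure :: 'a::euclidean_space measure)"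
proof -
  have "prob_space (uniform_measure lborel (ball (0::'a) 1))"
    using ball_meas_pos emeasure_lborel_ball_finite[of "0::'a" 1]
    by (intro prob_space_uniform_measure) auto
  then show ?thesis unfolding sphere_measure_def
    by (rule prob_space.prob_space_distr) simp
qed

lemma AE_sphere: "AE v in (sphere_measure :: 'a::euclidean_space measure). norm v = 1"
proof -
  have m: "(\<lambda>x::'a. x /\<^sub>R norm x) \<in> measurable (uniform_measure lborel (ball 0 1)) borel"
    by simp
  have "AE x in lborel. x \<in> ball (0::'a) 1 \<longrightarrow> norm (x /\<^sub>R norm x) = 1"
    using AE_lborel_singleton[of "0::'a"] by eventually_elim auto
  then have "AE x in uniform_measure lborel (ball (0::'a) 1). norm (x /\<^sub>R norm x) = 1"
    using ball_meas_pos emeasure_lborel_ball_finite[of "0::'a" 1]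
    by (subst AE_uniform_measure) auto
  then show ?thesis unfolding sphere_measure_def
    by (subst AE_distr_iff[OF m]) auto
qed


lemma sf_sphere: "sigma_finite_measure (sphere_measure :: 'a::euclidean_space measure)"
proof -
  interpret S: prob_space "sphere_measure :: 'a measure" by (rule prob_space_sphere)
  show ?thesis ..
qed

lemma line_null:
  fixes N :: "'a::euclidean_space set"
  assumes N: "N \<in> null_sets lborel"
  shows "AE (x,v) in lborel \<Otimes>\<^sub>M (sphere_measure::'a measure). AE t in lborel. x - t *\<^sub>R v \<notin> N"
proof -
  interpret S: sigma_finite_measure "sphere_measure :: 'a measure" by (rule sf_sphere)
  interpret P: pair_sigma_finite "lborel :: 'a measure" "sphere_measure :: 'a measure" ..
  interpret PS: sigma_finite_measure "lborel \<Otimes>\<^sub>M (sphere_measure :: 'a measure)"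
    by (rule sigma_finite_pair_measure) (rule lborel.sigma_finite_measure_axioms, rule sf_sphere)
  interpret Q: pair_sigma_finite "lborel \<Otimes>\<^sub>M (sphere_measure :: 'a measure)" "lborel :: real measure" ..
  have Nb[measurable]: "N \<in> sets borel" using N by (simp add: null_sets_def)
  define H where "H = (\<lambda>(p::('a\<times>'a)) (t::real). indicator N (fst p - t *\<^sub>R snd p) :: ennreal)"
  have meas[measurable]: "(\<lambda>(p,t). H p t) \<in> borel_measurable ((lborel \<Otimes>\<^sub>M sphere_measure) \<Otimes>\<^sub>M lborel)"
    unfolding H_def by measurable
  have shift: "(\<integral>\<^sup>+ x. indicator N (x - c) \<partial>lborel) = 0" for c :: 'a
  proof -
    have "(\<integral>\<^sup>+ x. indicator N (x - c) \<partial>lborel) = (\<integral>\<^sup>+ x. indicator N ((+) (-c) x) \<partial>lborel)"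
      by (simp add: algebra_simps)
    also have "\<dots> = (\<integral>\<^sup>+ y. indicator N y \<partial>distr lborel borel ((+) (-c)))"
      by (subst nn_integral_distr) auto
    also have "\<dots> = emeasure lborel N" by (simp add: lborel_distr_plus)
    finally show ?thesis using N by (simp add: null_sets_def)
  qed
  have inner: "(\<integral>\<^sup>+ p. H p t \<partial>(lborel \<Otimes>\<^sub>M sphere_measure)) = 0" for t
  proof -
    have m2: "(\<lambda>p. H p t) \<in> borel_measurable (lborel \<Otimes>\<^sub>M sphere_measure)"
      unfolding H_def by measurable
    have "(\<integral>\<^sup>+ p. H p t \<partial>(lborel \<Otimes>\<^sub>M sphere_measure)) = (\<integral>\<^sup>+ v. (\<integral>\<^sup>+ x. H (x,v) t \<partial>lborel) \<partial>sphere_measure)"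
      by (rule P.nn_integral_snd[OF m2, symmetric])
    also have "\<dots> = 0" unfolding H_def by (simp add: shift)
    finally show ?thesis .
  qed
  have "(\<integral>\<^sup>+ p. (\<integral>\<^sup>+ t. H p t \<partial>lborel) \<partial>(lborel \<Otimes>\<^sub>M sphere_measure))
      = integral\<^sup>N ((lborel \<Otimes>\<^sub>M sphere_measure) \<Otimes>\<^sub>M lborel) (\<lambda>(p,t). H p t)"
    using lborel.nn_integral_fst[OF meas] by simp
  also have "\<dots> = (\<integral>\<^sup>+ t. (\<integral>\<^sup>+ p. H p t \<partial>(lborel \<Otimes>\<^sub>M sphere_measure)) \<partial>lborel)"
    using Q.nn_integral_snd[OF meas] by simp
  also have "\<dots> = 0" by (simp add: inner)
  finally have z: "(\<integral>\<^sup>+ p. (\<integral>\<^sup>+ t. H p t \<partial>lborel) \<partial>(lborel \<Otimes>\<^sub>M sphere_measure)) = 0" .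
  have "AE p in lborel \<Otimes>\<^sub>M sphere_measure. (\<integral>\<^sup>+ t. H p t \<partial>lborel) = 0"
    using z by (subst (asm) nn_integral_0_iff_AE) measurable
  then show ?thesis
  proof (rule AE_mp, intro AE_I2 impI)
    fix p :: "'a \<times> 'a" assume "(\<integral>\<^sup>+ t. H p t \<partial>lborel) = 0"
    then have "AE t in lborel. H p t = 0"
      by (subst (asm) nn_integral_0_iff_AE) (auto simp: H_def)
    then show "case p of (x, v) \<Rightarrow> AE t in lborel. x - t *\<^sub>R v \<notin> N"
      by (cases p) (auto simp: H_def elim!: AE_mp)
  qed
qed


lemma set_integrable_bdd:
  fixes f :: "real \<Rightarrow> real"
  assumes fm: "f \<in> borel_measurable borel" and A: "A \<in> sets borel" "A \<subseteq> {lo..hi}"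
    and b: "AE x in lborel. x \<in> A \<longrightarrow> \<bar>f x\<bar> \<le> B" and B: "0 \<le> B"
  shows "set_integrable lborel A f"
  unfolding set_integrable_def
proof (rule integrableI_bounded_set[where A="{lo..hi}" and B=B])
  show "(\<lambda>x. indicator A x *\<^sub>R f x) \<in> borel_measurable lborel" using fm A by measurable
  show "emeasure lborel {lo..hi} < \<infinity>" by (rule emeasure_bounded_finite) simp
  show "AE x\<in>{lo..hi} in lborel. norm (indicator A x *\<^sub>R f x) \<le> B"
    using b by (rule AE_mp, intro AE_I2) (auto simp: indicator_def B)
  show "AE x in lborel. x \<notin> {lo..hi} \<longrightarrow> indicator A x *\<^sub>R f x = 0"
    using A by (intro AE_I2) (auto simp: indicator_def)
qed simp

lemma meas_F:
  fixes f :: "real \<Rightarrow> real"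
  assumes fm[measurable]: "f \<in> borel_measurable borel"
  shows "(\<lambda>t. LINT r:{0..t}|lborel. f r) \<in> borel_measurable borel"
proof -
  have eq: "(\<lambda>t. LINT r:{0..t}|lborel. f r) = (\<lambda>t. \<integral>r. (if 0 \<le> r \<and> r \<le> t then f r else 0) \<partial>lborel)"
    by (auto simp: set_lebesgue_integral_def indicator_def intro!: ext Bochner_Integration.integral_cong)
  have "(\<lambda>(t, r). if 0 \<le> r \<and> r \<le> t then f r else 0) \<in> borel_measurable (borel \<Otimes>\<^sub>M (lborel::real measure))"
    by measurable
  then show ?thesis unfolding eq by (rule lborel.borel_measurable_lebesgue_integral)
qed

lemma integral_point_zero:
  fixes f :: "real \<Rightarrow> real"
  shows "(LINT r:{c..c}|lborel. f r) = 0"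
  unfolding set_lebesgue_integral_def
  by (rule integral_eq_zero_AE) (rule AE_mp[OF AE_lborel_singleton[of c]], auto simp: indicator_def)


lemma exp_arith:
  fixes d K :: real
  assumes "0 \<le> d" "d \<le> K"
  shows "d \<le> exp K * (1 - exp (- d))"
proof -
  have "exp d * (1 - exp (- d)) = exp d - 1" by (simp add: algebra_simps exp_minus_inverse)
  also have "\<dots> \<ge> d" using exp_ge_add_one_self[of d] by linarith
  finally have 1: "d \<le> exp d * (1 - exp (- d))" .
  have "exp d * (1 - exp (- d)) \<le> exp K * (1 - exp (- d))"
    using assms by (intro mult_right_mono) auto
  with 1 show ?thesis by simp
qed

lemma partition_bound:
  fixes f :: "real \<Rightarrow> real"
  assumes fm[measurable]: "f \<in> borel_measurable borel" and tau: "0 \<le> \<tau>" and h: "0 < h" and C: "0 \<le> C"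
   and fb: "AE t in lborel. t \<in> {0..\<tau>} \<longrightarrow> 0 \<le> f t \<and> f t \<le> C"
  shows "(LINT t:{0..\<tau>}|lborel. f t * exp (- (LINT r:{0..t}|lborel. f r)))
          \<le> exp (C*h) * (1 - exp (- (LINT r:{0..\<tau>}|lborel. f r)))"
proof -
  define F where "F t = (LINT r:{0..t}|lborel. f r)" for t
  have Fm[measurable]: "F \<in> borel_measurable borel" using meas_F[OF fm] unfolding F_def[abs_def] .
  have fint: "set_integrable lborel A f" if "A \<in> sets borel" "A \<subseteq> {0..\<tau>}" for A
    by (rule set_integrable_bdd[OF fm that, where B=C], rule AE_mp[OF fb], rule AE_I2) (use that C in auto)
  have cint: "set_integrable lborel A (\<lambda>_. c)" if "A \<in> sets borel" "A \<subseteq> {0..\<tau>}" for A and c :: real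
    by (rule set_integrable_bdd[OF _ that, where B="\<bar>c\<bar>"]) auto
  have split: "F b = F a + (LINT r:{a<..b}|lborel. f r)" if "0 \<le> a" "a \<le> b" "b \<le> \<tau>" for a b
  proof -
    have "{0..b} = {0..a} \<union> {a<..b}" using that by auto
    then have "F b = (LINT r:({0..a} \<union> {a<..b})|lborel. f r)" by (simp add: F_def)
    also have "\<dots> = F a + (LINT r:{a<..b}|lborel. f r)" unfolding F_def
      by (rule set_integral_Un) (use that in \<open>auto intro!: fint\<close>)
    finally show ?thesis .
  qed
  have incr: "0 \<le> (LINT r:{a<..b}|lborel. f r) \<and> (LINT r:{a<..b}|lborel. f r) \<le> C * (b - a)"
    if "0 \<le> a" "a \<le> b" "b \<le> \<tau>" for a b
  proof
    have "(LINT r:{a<..b}|lborel. (0::real)) \<le> (LINT r:{a<..b}|lborel. f r)"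
      by (rule set_integral_mono_AE) (use that fb in \<open>auto intro!: fint cint elim!: AE_mp\<close>)
    then show "0 \<le> (LINT r:{a<..b}|lborel. f r)" by simp
    have "(LINT r:{a<..b}|lborel. f r) \<le> (LINT r:{a<..b}|lborel. C)"
      by (rule set_integral_mono_AE) (use that fb in \<open>auto intro!: fint cint elim!: AE_mp\<close>)
    also have "\<dots> = C * (b - a)" using that
      by (subst set_integral_const) (auto simp: emeasure_bounded_finite)
    finally show "(LINT r:{a<..b}|lborel. f r) \<le> C * (b - a)" .
  qed
  have F0: "F 0 = 0" unfolding F_def using integral_point_zero[where f=f and c=0] by simp
  have Fnn: "0 \<le> F t" if "0 \<le> t" "t \<le> \<tau>" for t
    using split[of 0 t] incr[of 0 t] that F0 by simp
  have Fmono: "F a \<le> F b" if "0 \<le> a" "a \<le> b" "b \<le> \<tau>" for a b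
    using split[OF that] incr[OF that] by simp
  define g where "g t = f t * exp (- F t)" for t
  have gm[measurable]: "g \<in> borel_measurable borel" unfolding g_def[abs_def] by measurable
  have gint: "set_integrable lborel A g" if "A \<in> sets borel" "A \<subseteq> {0..\<tau>}" for A
  proof (rule set_integrable_bdd[OF gm that, where B=C])
    show "AE x in lborel. x \<in> A \<longrightarrow> \<bar>g x\<bar> \<le> C"
      using fb
    proof (rule AE_mp, intro AE_I2 impI)
      fix x assume a: "x \<in> {0..\<tau>} \<longrightarrow> 0 \<le> f x \<and> f x \<le> C" and x: "x \<in> A"
      then have "x \<in> {0..\<tau>}" using that by auto
      then have "exp (- F x) \<le> 1" using Fnn by auto
      moreover have "0 \<le> f x" "f x \<le> C" using a \<open>x \<in> {0..\<tau>}\<close> by auto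
      ultimately have "f x * exp (- F x) \<le> C * 1" by (intro mult_mono) auto
      then show "\<bar>g x\<bar> \<le> C" using \<open>0 \<le> f x\<close> by (simp add: g_def)
    qed
  qed (use C in auto)
  have claim: "\<forall>s. 0 \<le> s \<and> s \<le> \<tau> \<and> s \<le> real n * h \<longrightarrow>
      (LINT t:{0..s}|lborel. g t) \<le> exp (C*h) * (1 - exp (- F s))" for n
  proof (induction n)
    case 0
    show ?case
    proof (intro allI impI)
      fix s assume "0 \<le> s \<and> s \<le> \<tau> \<and> s \<le> real 0 * h"
      then have "s = 0" by auto
      then show "(LINT t:{0..s}|lborel. g t) \<le> exp (C*h) * (1 - exp (- F s))"
        using integral_point_zero[where f=g and c=0] F0 by simp
    qed
  next
    case (Suc n)
    show ?case
    proof (intro allI impI)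
      fix s assume s: "0 \<le> s \<and> s \<le> \<tau> \<and> s \<le> real (Suc n) * h"
      show "(LINT t:{0..s}|lborel. g t) \<le> exp (C*h) * (1 - exp (- F s))"
      proof (cases "s \<le> real n * h")
        case True then show ?thesis using Suc.IH s by blast
      next
        case False
        define a where "a = real n * h"
        have a: "0 \<le> a" "a \<le> s" "s \<le> \<tau>" "s - a \<le> h" using False s h by (auto simp: a_def algebra_simps)
        have IHa: "(LINT t:{0..a}|lborel. g t) \<le> exp (C*h) * (1 - exp (- F a))"
          using Suc.IH a by (auto simp: a_def)
        have "{0..s} = {0..a} \<union> {a<..s}" using a by auto
        then have "(LINT t:{0..s}|lborel. g t) = (LINT t:({0..a} \<union> {a<..s})|lborel. g t)" by simp
        also have "\<dots> = (LINT t:{0..a}|lborel. g t) + (LINT t:{a<..s}|lborel. g t)"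
          by (rule set_integral_Un) (use a in \<open>auto intro!: gint\<close>)
        finally have eq: "(LINT t:{0..s}|lborel. g t) = (LINT t:{0..a}|lborel. g t) + (LINT t:{a<..s}|lborel. g t)" .
        have "(LINT t:{a<..s}|lborel. g t) \<le> (LINT t:{a<..s}|lborel. exp (- F a) * f t)"
        proof (rule set_integral_mono_AE)
          show "set_integrable lborel {a<..s} g" using a by (intro gint) auto
          show "set_integrable lborel {a<..s} (\<lambda>t. exp (- F a) * f t)"
            using a by (intro set_integrable_mult_right fint) auto
          show "AE t\<in>{a<..s} in lborel. g t \<le> exp (- F a) * f t"
            using fb
          proof (rule AE_mp, intro AE_I2 impI)
            fix t assume b: "t \<in> {0..\<tau>} \<longrightarrow> 0 \<le> f t \<and> f t \<le> C" and t: "t \<in> {a<..s}"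
            then have "0 \<le> f t" using a by auto
            moreover have "exp (- F t) \<le> exp (- F a)" using Fmono[of a t] a t by auto
            ultimately show "g t \<le> exp (- F a) * f t" unfolding g_def
              by (simp add: mult_left_mono mult.commute)
          qed
        qed
        also have "\<dots> = exp (- F a) * (F s - F a)" using split[of a s] a by simp
        finally have piece: "(LINT t:{a<..s}|lborel. g t) \<le> exp (- F a) * (F s - F a)" .
        have d: "0 \<le> F s - F a" "F s - F a \<le> C * h"
          using split[of a s] incr[of a s] a C by (auto intro: order_trans[OF _ mult_left_mono[OF a(4) C]])
        have "F s - F a \<le> exp (C*h) * (1 - exp (- (F s - F a)))" by (rule exp_arith[OF d])
        then have "exp (- F a) * (F s - F a) \<le> exp (- F a) * (exp (C*h) * (1 - exp (- (F s - F a))))"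
          by (rule mult_left_mono) simp
        also have "\<dots> = exp (C*h) * (exp (- F a) - exp (- F s))"
          by (simp add: algebra_simps flip: exp_add)
        finally have "(LINT t:{a<..s}|lborel. g t) \<le> exp (C*h) * (exp (- F a) - exp (- F s))"
          using piece by simp
        then show ?thesis using eq IHa by (simp add: algebra_simps)
      qed
    qed
  qed
  obtain n :: nat where "\<tau> / h \<le> real n" using real_arch_simple by blast
  then have "\<tau> \<le> real n * h" using h by (simp add: field_simps)
  then have "(LINT t:{0..\<tau>}|lborel. g t) \<le> exp (C*h) * (1 - exp (- F \<tau>))"
    using claim[of n] tau by blast
  then show ?thesis by (simp add: g_def F_def)
qed


lemma set_integral_nonneg_AE:
  fixes f :: "real \<Rightarrow> real"
  assumes "AE x in lborel. x \<in> A \<longrightarrow> 0 \<le> f x"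
  shows "0 \<le> (LINT x:A|lborel. f x)"
  unfolding set_lebesgue_integral_def
  by (rule integral_nonneg_AE) (use assms in \<open>auto simp: indicator_def elim!: AE_mp intro!: AE_I2\<close>)

lemma line_bound:
  fixes a s k :: "real \<Rightarrow> real"
  assumes am[measurable]: "a \<in> borel_measurable borel" and sm[measurable]: "s \<in> borel_measurable borel"
    and tau: "0 \<le> \<tau>" and h: "0 < h" and alo: "0 < alo" and M: "0 \<le> M" and shi: "0 \<le> shi" and ahi: "0 \<le> ahi"
    and b: "AE t in lborel. t \<in> {0..\<tau>} \<longrightarrow> alo \<le> a t \<and> a t \<le> ahi \<and> 0 \<le> s t \<and> s t \<le> shi \<and> -M \<le> k t"
  shows "-(M * (shi/(alo+shi)) * exp((ahi+shi)*h))
           \<le> (LINT t:{0..\<tau>}|lborel. exp (-(LINT r:{0..t}|lborel. a r + s r)) * s t * k t)"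
    and "exp (-((ahi+shi)*\<tau>)) \<le> exp (-(LINT r:{0..\<tau>}|lborel. a r + s r))"
proof -
  define f where "f r = a r + s r" for r
  define C where "C = ahi + shi"
  define F where "F t = (LINT r:{0..t}|lborel. f r)" for t
  define q where "q = shi/(alo+shi)"
  have fm[measurable]: "f \<in> borel_measurable borel" unfolding f_def[abs_def] by measurable
  have Fm[measurable]: "F \<in> borel_measurable borel" using meas_F[OF fm] unfolding F_def[abs_def] .
  have C: "0 \<le> C" using ahi shi by (simp add: C_def)
  have q: "0 \<le> q" using alo shi by (simp add: q_def)
  have fb: "AE t in lborel. t \<in> {0..\<tau>} \<longrightarrow> 0 \<le> f t \<and> f t \<le> C"
    using b by (rule AE_mp, intro AE_I2) (use alo in \<open>auto simp: f_def C_def\<close>)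
  have PB: "(LINT t:{0..\<tau>}|lborel. f t * exp (- F t)) \<le> exp (C*h) * (1 - exp (- F \<tau>))"
    using partition_bound[OF fm tau h C fb] unfolding F_def .
  have Fnn: "0 \<le> F t" if "t \<le> \<tau>" for t
    unfolding F_def by (rule set_integral_nonneg_AE, rule AE_mp[OF fb], rule AE_I2) (use that in auto)
  have i1: "set_integrable lborel {0..\<tau>} (\<lambda>t. exp (- F t) * s t)"
  proof (rule set_integrable_bdd[where B=shi])
    show "AE x in lborel. x \<in> {0..\<tau>} \<longrightarrow> \<bar>exp (- F x) * s x\<bar> \<le> shi"
    proof (rule AE_mp[OF b], rule AE_I2, intro impI)
      fix x assume 1: "x \<in> {0..\<tau>} \<longrightarrow> alo \<le> a x \<and> a x \<le> ahi \<and> 0 \<le> s x \<and> s x \<le> shi \<and> -M \<le> k x"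
        and x: "x \<in> {0..\<tau>}"
      have "exp (- F x) \<le> 1" using Fnn[of x] x by auto
      then have "exp (- F x) * s x \<le> 1 * shi" using 1 x by (intro mult_mono) auto
      then show "\<bar>exp (- F x) * s x\<bar> \<le> shi" using 1 x by simp
    qed
  qed (use shi in auto)
  have i2: "set_integrable lborel {0..\<tau>} (\<lambda>t. f t * exp (- F t))"
  proof (rule set_integrable_bdd[where B=C])
    show "AE x in lborel. x \<in> {0..\<tau>} \<longrightarrow> \<bar>f x * exp (- F x)\<bar> \<le> C"
    proof (rule AE_mp[OF fb], rule AE_I2, intro impI)
      fix x assume 1: "x \<in> {0..\<tau>} \<longrightarrow> 0 \<le> f x \<and> f x \<le> C" and x: "x \<in> {0..\<tau>}"
      have "exp (- F x) \<le> 1" using Fnn[of x] x by auto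
      then have "f x * exp (- F x) \<le> C * 1" using 1 x by (intro mult_mono) auto
      then show "\<bar>f x * exp (- F x)\<bar> \<le> C" using 1 x by simp
    qed
  qed (use C in auto)
  have "(LINT t:{0..\<tau>}|lborel. exp (- F t) * s t) \<le> (LINT t:{0..\<tau>}|lborel. q * (f t * exp (- F t)))"
  proof (rule set_integral_mono_AE[OF i1])
    show "set_integrable lborel {0..\<tau>} (\<lambda>t. q * (f t * exp (- F t)))" using i2 by simp
    show "AE t\<in>{0..\<tau>} in lborel. exp (- F t) * s t \<le> q * (f t * exp (- F t))"
    proof (rule AE_mp[OF b], rule AE_I2, intro impI)
      fix x assume 1: "x \<in> {0..\<tau>} \<longrightarrow> alo \<le> a x \<and> a x \<le> ahi \<and> 0 \<le> s x \<and> s x \<le> shi \<and> -M \<le> k x"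
        and x: "x \<in> {0..\<tau>}"
      have "s x * alo \<le> shi * a x" using 1 x alo shi by (intro mult_mono) auto
      then have "s x * (alo + shi) \<le> shi * (a x + s x)" using 1 x by (simp add: algebra_simps mult_right_mono)
      then have "s x \<le> q * f x" using alo shi by (simp add: q_def f_def field_simps)
      then show "exp (- F x) * s x \<le> q * (f x * exp (- F x))"
        by (simp add: mult_left_mono mult.commute mult.left_commute)
    qed
  qed
  also have "\<dots> = q * (LINT t:{0..\<tau>}|lborel. f t * exp (- F t))" by simp
  also have "\<dots> \<le> q * (exp (C*h) * (1 - exp (- F \<tau>)))" using PB q by (rule mult_left_mono)
  also have "\<dots> \<le> q * exp (C*h)" using q by (intro mult_left_mono) auto
  finally have J: "(LINT t:{0..\<tau>}|lborel. exp (- F t) * s t) \<le> q * exp (C*h)" .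
  show "-(M * (shi/(alo+shi)) * exp((ahi+shi)*h))
           \<le> (LINT t:{0..\<tau>}|lborel. exp (-(LINT r:{0..t}|lborel. a r + s r)) * s t * k t)"
  proof (cases "set_integrable lborel {0..\<tau>} (\<lambda>t. exp (- F t) * s t * k t)")
    case True
    have "(LINT t:{0..\<tau>}|lborel. - M * (exp (- F t) * s t)) \<le> (LINT t:{0..\<tau>}|lborel. exp (- F t) * s t * k t)"
    proof (rule set_integral_mono_AE[OF _ True])
      show "set_integrable lborel {0..\<tau>} (\<lambda>t. - M * (exp (- F t) * s t))"
        using set_integrable_mult_right[OF i1, of "- M"] by simp
      show "AE t\<in>{0..\<tau>} in lborel. - M * (exp (- F t) * s t) \<le> exp (- F t) * s t * k t"
      proof (rule AE_mp[OF b], rule AE_I2, intro impI)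
        fix x assume 1: "x \<in> {0..\<tau>} \<longrightarrow> alo \<le> a x \<and> a x \<le> ahi \<and> 0 \<le> s x \<and> s x \<le> shi \<and> -M \<le> k x"
          and x: "x \<in> {0..\<tau>}"
        have "0 \<le> exp (- F x) * s x" using 1 x by simp
        then have "(exp (- F x) * s x) * (- M) \<le> (exp (- F x) * s x) * k x" using 1 x
          by (intro mult_left_mono) auto
        then show "- M * (exp (- F x) * s x) \<le> exp (- F x) * s x * k x" by (simp add: mult.commute)
      qed
    qed
    moreover have "(LINT t:{0..\<tau>}|lborel. - M * (exp (- F t) * s t)) \<ge> - (M * (q * exp (C*h)))"
    proof -
      have "(LINT t:{0..\<tau>}|lborel. - M * (exp (- F t) * s t)) = - M * (LINT t:{0..\<tau>}|lborel. exp (- F t) * s t)"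
        by (rule set_integral_mult_right)
      moreover have "M * (LINT t:{0..\<tau>}|lborel. exp (- F t) * s t) \<le> M * (q * exp (C*h))"
        using J M by (rule mult_left_mono)
      ultimately show ?thesis by simp
    qed
    ultimately show ?thesis by (simp add: F_def f_def q_def C_def mult.assoc)
  next
    case False
    then have "(LINT t:{0..\<tau>}|lborel. exp (- F t) * s t * k t) = 0"
      by (simp add: set_lebesgue_integral_def set_integrable_def not_integrable_integral_eq)
    moreover have "0 \<le> M * (shi/(alo+shi)) * exp((ahi+shi)*h)" using M q unfolding q_def
      by (intro mult_nonneg_nonneg) auto
    ultimately show ?thesis by (simp add: F_def f_def)
  qed
  have "F \<tau> \<le> C * \<tau>"
  proof (cases "set_integrable lborel {0..\<tau>} f")
    case True
    have "F \<tau> \<le> (LINT t:{0..\<tau>}|lborel. C)" unfolding F_def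
    proof (rule set_integral_mono_AE[OF True])
      show "set_integrable lborel {0..\<tau>} (\<lambda>t. C)"
        by (rule set_integrable_bdd[where B="\<bar>C\<bar>"]) auto
      show "AE t\<in>{0..\<tau>} in lborel. f t \<le> C" using fb by (rule AE_mp, intro AE_I2) auto
    qed
    also have "\<dots> = C * \<tau>" using tau by (subst set_integral_const) (auto simp: emeasure_bounded_finite)
    finally show ?thesis .
  next
    case False
    then have "F \<tau> = 0"
      by (simp add: F_def set_lebesgue_integral_def set_integrable_def not_integrable_integral_eq)
    then show ?thesis using C tau by simp
  qed
  then show "exp (-((ahi+shi)*\<tau>)) \<le> exp (-(LINT r:{0..\<tau>}|lborel. a r + s r))"
    by (simp add: F_def f_def C_def)
qed


lemma norm_le_by_coords:
  fixes w h :: "'a::euclidean_space"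
  assumes "\<And>b. b \<in> Basis \<Longrightarrow> \<bar>w \<bullet> b\<bar> \<le> \<bar>h \<bullet> b\<bar>"
  shows "norm w \<le> norm h"
proof -
  have "w \<bullet> w = (\<Sum>b\<in>Basis. \<bar>w \<bullet> b\<bar> * \<bar>w \<bullet> b\<bar>)" by (subst euclidean_inner) (simp add: abs_mult_self_eq)
  also have "\<dots> \<le> (\<Sum>b\<in>Basis. \<bar>h \<bullet> b\<bar> * \<bar>h \<bullet> b\<bar>)"
    by (intro sum_mono mult_mono assms) auto
  also have "\<dots> = h \<bullet> h" by (subst (2) euclidean_inner) (simp add: abs_mult_self_eq)
  finally show ?thesis by (simp add: norm_le)
qed

lemma coord_p:
  fixes h :: "'a::euclidean_space"
  assumes "S \<subseteq> Basis" "b \<in> Basis"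
  shows "(\<Sum>b'\<in>S. (h \<bullet> b') *\<^sub>R b') \<bullet> b = (if b \<in> S then h \<bullet> b else 0)"
proof -
  have fin: "finite S" using assms(1) finite_Basis by (rule finite_subset)
  have "(\<Sum>b'\<in>S. (h \<bullet> b') *\<^sub>R b') \<bullet> b = (\<Sum>b'\<in>S. (h \<bullet> b') * (if b' = b then 1 else 0))"
    unfolding inner_sum_left inner_scaleR_left
    by (rule sum.cong) (use assms in \<open>auto simp: inner_Basis\<close>)
  also have "\<dots> = (\<Sum>b'\<in>S. if b' = b then h \<bullet> b else 0)" by (rule sum.cong) auto
  also have "\<dots> = (if b \<in> S then h \<bullet> b else 0)" using fin by (simp add: sum.delta')
  finally show ?thesis .
qed

lemma mv_bound:
  fixes g g' :: "real \<Rightarrow> real"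
  assumes D: "\<And>t. (g has_real_derivative g' t) (at t)"
    and bnd: "\<And>t. t \<in> closed_segment 0 c \<Longrightarrow> \<bar>g' t - L\<bar> \<le> e"
  shows "\<bar>g c - g 0 - c * L\<bar> \<le> e * \<bar>c\<bar>"
proof -
  define \<phi> where "\<phi> s = g s - s * L" for s
  have D\<phi>: "(\<phi> has_real_derivative (g' t - L)) (at t)" for t
    unfolding \<phi>_def[abs_def] by (auto intro!: derivative_eq_intros D)
  have fin: "\<bar>g c - g 0 - c * L\<bar> \<le> e * \<bar>c\<bar>" if "g c - g 0 - c * L = c * (g' z - L)" "z \<in> closed_segment 0 c" for z
  proof -
    have "\<bar>g' z - L\<bar> \<le> e" using bnd that(2) .
    then have "\<bar>c\<bar> * \<bar>g' z - L\<bar> \<le> \<bar>c\<bar> * e" by (rule mult_left_mono) simp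
    then show ?thesis using that(1) by (simp add: abs_mult mult.commute)
  qed
  consider "c = 0" | "c > 0" | "c < 0" by linarith
  then show ?thesis
  proof cases
    case 1 then show ?thesis by simp
  next
    case 2
    obtain z where z: "0 < z" "z < c" "\<phi> c - \<phi> 0 = (c - 0) * (g' z - L)"
      using MVT2[OF 2, of \<phi> "\<lambda>t. g' t - L"] D\<phi> by blast
    show ?thesis
      by (rule fin[of z]) (use z in \<open>auto simp: \<phi>_def algebra_simps closed_segment_eq_real_ivl\<close>)
  next
    case 3
    obtain z where z: "c < z" "z < 0" "\<phi> 0 - \<phi> c = (0 - c) * (g' z - L)"
      using MVT2[OF 3, of \<phi> "\<lambda>t. g' t - L"] D\<phi> by blast
    show ?thesis
      by (rule fin[of z]) (use z in \<open>auto simp: \<phi>_def algebra_simps closed_segment_eq_real_ivl\<close>)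
  qed
qed

lemma partials_diff:
  fixes f :: "'a::euclidean_space \<Rightarrow> real"
  assumes D: "\<And>x b. b \<in> Basis \<Longrightarrow> ((\<lambda>t. f (x + t *\<^sub>R b)) has_real_derivative P b x) (at 0)"
    and Pc: "\<And>b. b \<in> Basis \<Longrightarrow> continuous_on UNIV (P b)"
  shows "(f has_derivative (\<lambda>h. \<Sum>b\<in>Basis. (h \<bullet> b) * P b y)) (at y)"
proof -
  have Dt: "((\<lambda>s. f (z + s *\<^sub>R b)) has_real_derivative P b (z + t *\<^sub>R b)) (at t)" if "b \<in> Basis" for z b t
  proof -
    have "((\<lambda>s. f ((z + t *\<^sub>R b) + s *\<^sub>R b)) has_real_derivative P b (z + t *\<^sub>R b)) (at 0)" using D that .
    moreover have "(\<lambda>s. f ((z + t *\<^sub>R b) + s *\<^sub>R b)) = (\<lambda>s. f (z + (s + t) *\<^sub>R b))"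
      by (simp add: algebra_simps scaleR_add_left)
    ultimately have "((\<lambda>s. f (z + (s + t) *\<^sub>R b)) has_real_derivative P b (z + t *\<^sub>R b)) (at 0)" by simp
    then show ?thesis using DERIV_shift[of "\<lambda>s. f (z + s *\<^sub>R b)" "P b (z + t *\<^sub>R b)" 0 t] by simp
  qed
  have lin: "bounded_linear (\<lambda>h. \<Sum>b\<in>Basis. (h \<bullet> b) * P b y)"
    by (intro bounded_linear_sum bounded_linear_compose[OF bounded_linear_mult_left bounded_linear_inner_left])
  show ?thesis unfolding has_derivative_at_alt
  proof (intro conjI lin allI impI)
    fix e :: real assume e: "e > 0"
    define e' where "e' = e / DIM('a)"
    have e': "e' > 0" using e by (simp add: e'_def)
    have "\<forall>\<^sub>F z in at y. \<forall>b\<in>Basis. dist (P b z) (P b y) < e'"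
    proof (rule eventually_ball_finite)
      show "\<forall>b\<in>Basis. \<forall>\<^sub>F z in at y. dist (P b z) (P b y) < e'"
      proof
        fix b :: 'a assume b: "b \<in> Basis"
        have "isCont (P b) y" using Pc[OF b] by (simp add: continuous_on_eq_continuous_at)
        then show "\<forall>\<^sub>F z in at y. dist (P b z) (P b y) < e'"
          unfolding isCont_def using e' by (rule tendstoD)
      qed
    qed simp
    then obtain d where d: "d > 0" "\<And>z. z \<noteq> y \<Longrightarrow> dist z y < d \<Longrightarrow> \<forall>b\<in>Basis. dist (P b z) (P b y) < e'"
      by (auto simp: eventually_at)
    have d': "\<bar>P b z - P b y\<bar> \<le> e'" if "dist z y < d" "b \<in> Basis" for z b
      using d(2)[of z] that e' by (cases "z = y") (auto simp: dist_real_def)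
    show "\<exists>d>0. \<forall>y'. norm (y' - y) < d \<longrightarrow>
            norm (f y' - f y - (\<Sum>b\<in>Basis. ((y' - y) \<bullet> b) * P b y)) \<le> e * norm (y' - y)"
    proof (intro exI[of _ d] conjI allI impI)
      show "0 < d" by fact
      fix y' assume hy: "norm (y' - y) < d"
      define h where "h = y' - y"
      define p where "p S = (\<Sum>b\<in>S. (h \<bullet> b) *\<^sub>R b)" for S
      have ind: "finite S \<Longrightarrow> S \<subseteq> Basis \<Longrightarrow>
          \<bar>f (y + p S) - f y - (\<Sum>b\<in>S. (h \<bullet> b) * P b y)\<bar> \<le> e' * (\<Sum>b\<in>S. \<bar>h \<bullet> b\<bar>)" for S
      proof (induction S rule: finite_induct)
        case empty
        then show ?case by (simp add: p_def)
      next
        case (insert b' S)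
        define z where "z = y + p S"
        define c where "c = h \<bullet> b'"
        have b': "b' \<in> Basis" and S: "S \<subseteq> Basis" using insert by auto
        have pins: "y + p (insert b' S) = z + c *\<^sub>R b'"
          using insert by (simp add: p_def z_def c_def algebra_simps)
        have step: "\<bar>f (z + c *\<^sub>R b') - f z - c * P b' y\<bar> \<le> e' * \<bar>c\<bar>"
        proof (rule mv_bound[where g="\<lambda>s. f (z + s *\<^sub>R b')", OF Dt[OF b'], simplified])
          fix t assume t: "t \<in> closed_segment 0 c"
          have "norm (p S + t *\<^sub>R b') \<le> norm h"
          proof (rule norm_le_by_coords)
            fix b :: 'a assume b: "b \<in> Basis"
            have "(p S + t *\<^sub>R b') \<bullet> b = (if b \<in> S then h \<bullet> b else 0) + t * (b' \<bullet> b)"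
              using coord_p[OF S b, of h] by (simp add: p_def inner_add_left)
            moreover have "\<bar>t\<bar> \<le> \<bar>c\<bar>" using t by (auto simp: closed_segment_eq_real_ivl split: if_splits)
            ultimately show "\<bar>(p S + t *\<^sub>R b') \<bullet> b\<bar> \<le> \<bar>h \<bullet> b\<bar>"
              using b b' insert(2) by (auto simp: inner_Basis c_def)
          qed
          then have "dist (z + t *\<^sub>R b') y < d" using hy by (simp add: z_def dist_norm h_def)
          then show "\<bar>P b' (z + t *\<^sub>R b') - P b' y\<bar> \<le> e'" using d' b' by blast
        qed
        have IH: "\<bar>f z - f y - (\<Sum>b\<in>S. (h \<bullet> b) * P b y)\<bar> \<le> e' * (\<Sum>b\<in>S. \<bar>h \<bullet> b\<bar>)"
          using insert S by (simp add: z_def)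
        have "\<bar>f (y + p (insert b' S)) - f y - (\<Sum>b\<in>insert b' S. (h \<bullet> b) * P b y)\<bar>
            = \<bar>(f (z + c *\<^sub>R b') - f z - c * P b' y) + (f z - f y - (\<Sum>b\<in>S. (h \<bullet> b) * P b y))\<bar>"
          using insert by (simp add: pins c_def)
        also have "\<dots> \<le> e' * \<bar>c\<bar> + e' * (\<Sum>b\<in>S. \<bar>h \<bullet> b\<bar>)"
          using step IH by linarith
        also have "\<dots> = e' * (\<Sum>b\<in>insert b' S. \<bar>h \<bullet> b\<bar>)"
          using insert by (simp add: c_def algebra_simps)
        finally show ?case .
      qed
      have pB: "p Basis = h" by (simp add: p_def euclidean_representation)
      have "\<bar>f y' - f y - (\<Sum>b\<in>Basis. (h \<bullet> b) * P b y)\<bar> \<le> e' * (\<Sum>b\<in>Basis. \<bar>h \<bullet> b\<bar>)"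
        using ind[of Basis] pB by (simp add: h_def)
      also have "\<dots> \<le> e' * (\<Sum>b\<in>(Basis::'a set). norm h)"
        using e' by (intro mult_left_mono sum_mono Basis_le_norm) auto
      also have "\<dots> = e * norm h" by (simp add: e'_def)
      finally show "norm (f y' - f y - (\<Sum>b\<in>Basis. ((y' - y) \<bullet> b) * P b y)) \<le> e * norm (y' - y)"
        by (simp add: h_def)
    qed
  qed
qed


lemma grad_deriv:
  fixes f :: "'a::euclidean_space \<Rightarrow> real"
  assumes d: "(f has_derivative f') (at y)"
  shows "(f has_derivative (\<lambda>w. grad f y \<bullet> w)) (at y)"
proof -
  have fd: "frechet_derivative f (at y) = f'" using frechet_derivative_at[OF d] by simp
  interpret L: bounded_linear f' using has_derivative_bounded_linear[OF d] .
  have "f' w = grad f y \<bullet> w" for w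
  proof -
    have "f' w = f' (\<Sum>b\<in>Basis. (w \<bullet> b) *\<^sub>R b)" by (simp add: euclidean_representation)
    also have "\<dots> = (\<Sum>b\<in>Basis. (w \<bullet> b) * f' b)" by (simp add: L.sum L.scaleR)
    also have "\<dots> = grad f y \<bullet> w" unfolding grad_def fd inner_sum_left inner_scaleR_left
      by (rule sum.cong) (auto simp: inner_commute mult.commute)
    finally show ?thesis .
  qed
  then have "f' = (\<lambda>w. grad f y \<bullet> w)" by auto
  with d show ?thesis by simp
qed


lemma smooth_diff:
  fixes f :: "'a::euclidean_space \<Rightarrow> real"
  assumes "smooth_fun f"
  shows "\<exists>D. (f has_derivative D) (at y)" and "continuous_on UNIV f"
proof -
  have A: "\<forall>bs. set bs \<subseteq> Basis \<longrightarrow> continuous_on UNIV (pderivs bs f) \<and>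
      (\<forall>b\<in>Basis. \<forall>x. (\<lambda>t. pderivs bs f (x + t *\<^sub>R b)) differentiable (at 0))"
    using assms unfolding smooth_fun_def .
  define P where "P b x = pderivs [b] f x" for b x
  from A[rule_format, of "[]"] show c0: "continuous_on UNIV f" by simp
  have D: "((\<lambda>t. f (x + t *\<^sub>R b)) has_real_derivative P b x) (at 0)" if "b \<in> Basis" for x b
  proof -
    have "(\<lambda>t. f (x + t *\<^sub>R b)) differentiable (at 0)" using A[rule_format, of "[]"] that by simp
    then show ?thesis by (simp add: P_def DERIV_deriv_iff_real_differentiable)
  qed
  have Pc: "continuous_on UNIV (P b)" if "b \<in> Basis" for b
    using A[rule_format, of "[b]"] that unfolding P_def[abs_def] by simp
  show "\<exists>D. (f has_derivative D) (at y)" using partials_diff[OF D Pc] by blast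
qed

lemma tau_facts:
  fixes \<Omega> :: "'a::euclidean_space set"
  assumes op: "open \<Omega>" and cv: "convex \<Omega>" and R: "\<forall>z\<in>\<Omega>. norm z \<le> R" and x: "x \<in> \<Omega>" and v: "norm v = 1"
  shows "0 < tau_minus \<Omega> x v" "tau_minus \<Omega> x v \<le> 2 * R"
    "\<forall>t. 0 \<le> t \<and> t < tau_minus \<Omega> x v \<longrightarrow> x - t *\<^sub>R v \<in> \<Omega>"
    "x - tau_minus \<Omega> x v *\<^sub>R v \<in> frontier \<Omega>"
proof -
  define T where "T = {t. 0 \<le> t \<and> x - t *\<^sub>R v \<in> \<Omega>}"
  have tau: "tau_minus \<Omega> x v = Sup T" by (simp add: tau_minus_def T_def)
  have T0: "0 \<in> T" using x by (simp add: T_def)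
  have Tb: "t \<le> 2*R" if "t \<in> T" for t
  proof -
    from that have t: "0 \<le> t" "x - t *\<^sub>R v \<in> \<Omega>" by (auto simp: T_def)
    have "t = norm (x - (x - t *\<^sub>R v))" using t v by simp
    also have "\<dots> \<le> norm x + norm (x - t *\<^sub>R v)" by (rule norm_triangle_ineq4)
    also have "\<dots> \<le> 2 * R" using R x t(2) by (smt (verit))
    finally show ?thesis .
  qed
  have bdd: "bdd_above T" using Tb by (auto simp: bdd_above_def)
  have ne: "T \<noteq> {}" using T0 by auto
  obtain e where e: "e > 0" "ball x e \<subseteq> \<Omega>" using op x open_contains_ball by blast
  have "x - (e/2) *\<^sub>R v \<in> ball x e" using e v by (simp add: dist_norm)
  then have "e/2 \<in> T" using e by (auto simp: T_def)
  then have "e/2 \<le> Sup T" using bdd by (rule cSup_upper)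
  then show "0 < tau_minus \<Omega> x v" using e tau by simp
  show "tau_minus \<Omega> x v \<le> 2 * R" using cSup_least[OF ne] Tb tau by auto
  have seg: "x - t *\<^sub>R v \<in> \<Omega>" if t: "0 \<le> t" "t < Sup T" for t
  proof -
    obtain t' where t': "t' \<in> T" "t < t'" using less_cSup_iff[OF ne bdd] t by blast
    then have t'': "0 < t'" "x - t' *\<^sub>R v \<in> \<Omega>" using t by (auto simp: T_def)
    define u where "u = t / t'"
    have u: "0 \<le> u" "u \<le> 1" using t t' t'' by (auto simp: u_def)
    have "(1 - u) *\<^sub>R x + u *\<^sub>R (x - t' *\<^sub>R v) \<in> \<Omega>"
      using cv x t'' u unfolding convex_alt by blast
    moreover have "(1 - u) *\<^sub>R x + u *\<^sub>R (x - t' *\<^sub>R v) = x - t *\<^sub>R v"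
      using t'' by (simp add: u_def algebra_simps)
    ultimately show ?thesis by simp
  qed
  then show "\<forall>t. 0 \<le> t \<and> t < tau_minus \<Omega> x v \<longrightarrow> x - t *\<^sub>R v \<in> \<Omega>" using tau by auto
  have notin: "x - Sup T *\<^sub>R v \<notin> \<Omega>"
  proof
    assume a: "x - Sup T *\<^sub>R v \<in> \<Omega>"
    obtain e2 where e2: "e2 > 0" "ball (x - Sup T *\<^sub>R v) e2 \<subseteq> \<Omega>" using op a open_contains_ball by blast
    have "x - (Sup T + e2/2) *\<^sub>R v \<in> ball (x - Sup T *\<^sub>R v) e2"
      using e2 v by (simp add: dist_norm algebra_simps)
    moreover have "0 \<le> Sup T" using cSup_upper[OF T0 bdd] .
    ultimately have "Sup T + e2/2 \<in> T" using e2 by (auto simp: T_def)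
    then have "Sup T + e2/2 \<le> Sup T" using bdd by (rule cSup_upper)
    then show False using e2 by simp
  qed
  have "x - Sup T *\<^sub>R v \<in> closure \<Omega>"
    unfolding closure_approachable
  proof (intro allI impI)
    fix \<epsilon> :: real assume \<epsilon>: "\<epsilon> > 0"
    define t where "t = max 0 (Sup T - \<epsilon>/2)"
    have "0 < Sup T" using \<open>0 < tau_minus \<Omega> x v\<close> tau by simp
    then have t: "0 \<le> t" "t < Sup T" "Sup T - t \<le> \<epsilon>/2" using \<epsilon> by (auto simp: t_def max_def)
    have "x - t *\<^sub>R v \<in> \<Omega>" using seg t by blast
    moreover have "dist (x - t *\<^sub>R v) (x - Sup T *\<^sub>R v) = Sup T - t"
    proof -
      have "dist (x - t *\<^sub>R v) (x - Sup T *\<^sub>R v) = norm ((Sup T - t) *\<^sub>R v)"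
        by (simp add: dist_norm algebra_simps)
      also have "\<dots> = Sup T - t" using t v by simp
      finally show ?thesis .
    qed
    ultimately show "\<exists>y\<in>\<Omega>. dist y (x - Sup T *\<^sub>R v) < \<epsilon>" using t \<epsilon> by force
  qed
  then show "x - tau_minus \<Omega> x v *\<^sub>R v \<in> frontier \<Omega>"
    using notin op tau by (simp add: frontier_def interior_open)
qed

lemma gamma_in:
  fixes \<Omega> :: "'a::euclidean_space set"
  assumes op: "open \<Omega>" and cv: "convex \<Omega>" and sd: "smooth_domain \<Omega>" and x: "x \<in> \<Omega>" and v: "norm v = 1"
    and yfr: "x - \<tau> *\<^sub>R v \<in> frontier \<Omega>" and tau: "0 < \<tau>"
  shows "(x - \<tau> *\<^sub>R v, v) \<in> Gamma_minus \<Omega>"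
proof -
  define y where "y = x - \<tau> *\<^sub>R v"
  define \<rho> where "\<rho> = (SOME \<rho>. defining_function \<Omega> \<rho>)"
  have df: "defining_function \<Omega> \<rho>" using sd unfolding smooth_domain_def \<rho>_def by (rule someI_ex)
  then have sm: "smooth_fun \<rho>" and Om: "\<Omega> = {x. \<rho> x < 0}" and gnz: "\<forall>x. \<rho> x = 0 \<longrightarrow> grad \<rho> x \<noteq> 0"
    by (auto simp: defining_function_def)
  have cont: "continuous_on UNIV \<rho>" using smooth_diff(2)[OF sm] .
  obtain D where "(\<rho> has_derivative D) (at y)" using smooth_diff(1)[OF sm] by blast
  then have dr: "(\<rho> has_derivative (\<lambda>w. grad \<rho> y \<bullet> w)) (at y)" by (rule grad_deriv)
  have ycl: "y \<in> closure \<Omega>" and ynot: "y \<notin> \<Omega>" using yfr op by (auto simp: y_def frontier_def interior_open)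
  have "closed {z. \<rho> z \<le> 0}" using cont by (intro closed_Collect_le) (auto intro: continuous_on_const)
  then have "closure \<Omega> \<subseteq> {z. \<rho> z \<le> 0}" using Om by (intro closure_minimal) auto
  then have "\<rho> y \<le> 0" using ycl by auto
  moreover have "\<rho> y \<ge> 0" using ynot Om by auto
  ultimately have \<rho>y: "\<rho> y = 0" by simp
  define n where "n = grad \<rho> y"
  have nz: "n \<noteq> 0" using gnz \<rho>y by (simp add: n_def)
  have neg: "n \<bullet> v < 0"
  proof (rule ccontr)
    assume "\<not> n \<bullet> v < 0"
    then have nv: "n \<bullet> v \<ge> 0" by simp
    obtain e where e: "e > 0" "ball x e \<subseteq> \<Omega>" using op x open_contains_ball by blast
    define z where "z = x + (e / (2 * norm n)) *\<^sub>R n"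
    have "dist x z = e/2" using nz e by (simp add: z_def dist_norm)
    then have zin: "z \<in> \<Omega>" using e by auto
    define w where "w = z - y"
    have w: "w = \<tau> *\<^sub>R v + (e / (2 * norm n)) *\<^sub>R n" by (simp add: w_def z_def y_def)
    have nw: "n \<bullet> w > 0"
    proof -
      have "n \<bullet> w = \<tau> * (n \<bullet> v) + (e / (2 * norm n)) * (n \<bullet> n)"
        by (simp add: w inner_add_right)
      moreover have "(e / (2 * norm n)) * (n \<bullet> n) > 0" using nz e by (intro mult_pos_pos) auto
      moreover have "\<tau> * (n \<bullet> v) \<ge> 0" using tau nv by simp
      ultimately show ?thesis by linarith
    qed
    have zy: "z \<noteq> y" using zin ynot by auto
    have seg: "y + s *\<^sub>R w \<in> \<Omega>" if s: "0 < s" "s < 1" for s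
    proof -
      have "open_segment z y \<subseteq> interior \<Omega>"
        using in_interior_closure_convex_segment[OF cv _ ycl, of z] zin op by (simp add: interior_open)
      moreover have "y + s *\<^sub>R w \<in> open_segment z y"
        unfolding in_segment
        by (rule conjI[OF zy], rule exI[of _ "1 - s"]) (use s in \<open>auto simp: w_def algebra_simps\<close>)
      ultimately show ?thesis using op by (auto simp: interior_open)
    qed
    have d1: "((\<lambda>s::real. y + s *\<^sub>R w) has_derivative (\<lambda>s. s *\<^sub>R w)) (at 0)"
      by (auto intro!: derivative_eq_intros)
    have d2: "(\<rho> has_derivative (\<lambda>w'. n \<bullet> w')) (at ((\<lambda>s::real. y + s *\<^sub>R w) 0))"
      using dr by (simp add: n_def)
    have "((\<lambda>s. \<rho> (y + s *\<^sub>R w)) has_derivative (\<lambda>s. n \<bullet> (s *\<^sub>R w))) (at 0)"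
      using has_derivative_compose[OF d1 d2] by simp
    moreover have "(\<lambda>s. n \<bullet> (s *\<^sub>R w)) = (*) (n \<bullet> w)" by (auto simp: mult.commute)
    ultimately have "((\<lambda>s. \<rho> (y + s *\<^sub>R w)) has_real_derivative (n \<bullet> w)) (at 0)"
      by (simp add: has_field_derivative_def)
    from DERIV_pos_inc_right[OF this nw] obtain d where d: "d > 0"
      "\<And>h. h > 0 \<Longrightarrow> h < d \<Longrightarrow> \<rho> (y + 0 *\<^sub>R w) < \<rho> (y + (0 + h) *\<^sub>R w)" by blast
    define h where "h = min (d/2) (1/2)"
    have h: "0 < h" "h < d" "h < 1" using d by (auto simp: h_def)
    have "\<rho> y < \<rho> (y + h *\<^sub>R w)" using d(2)[OF h(1,2)] by simp
    moreover have "\<rho> (y + h *\<^sub>R w) < 0" using seg[OF h(1,3)] Om by auto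
    ultimately show False using \<rho>y by simp
  qed
  have "- (outer_normal \<Omega> y \<bullet> v) > 0"
    using neg nz by (simp add: outer_normal_def Let_def \<rho>_def[symmetric] n_def[symmetric] mult_pos_neg)
  then show ?thesis using yfr v by (simp add: Gamma_minus_def y_def)
qed


lemma scat_lb:
  fixes \<Theta> u :: "'a::euclidean_space \<Rightarrow> 'a \<Rightarrow> real"
  assumes th0: "AE v' in sphere_measure. 0 \<le> \<Theta> v v'"
    and th1: "(\<integral>v'. \<Theta> v v' \<partial>sphere_measure) = 1"
    and ub: "AE v' in sphere_measure. -M \<le> u x' v'" and M: "0 \<le> M"
  shows "-M \<le> scat_op \<Theta> u x' v"
proof (cases "integrable sphere_measure (\<lambda>v'. \<Theta> v v' * u x' v')")
  case True
  have ti: "integrable sphere_measure (\<Theta> v)"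
    using th1 not_integrable_integral_eq[of sphere_measure "\<Theta> v"] by force
  have "(\<integral>v'. - M * \<Theta> v v' \<partial>sphere_measure) \<le> (\<integral>v'. \<Theta> v v' * u x' v' \<partial>sphere_measure)"
  proof (rule integral_mono_AE)
    show "integrable sphere_measure (\<lambda>v'. - M * \<Theta> v v')" using ti by simp
    show "integrable sphere_measure (\<lambda>v'. \<Theta> v v' * u x' v')" by fact
    show "AE v' in sphere_measure. - M * \<Theta> v v' \<le> \<Theta> v v' * u x' v'"
      using th0 ub by eventually_elim (metis mult.commute mult_left_mono mult_minus_left)
  qed
  then show ?thesis using th1 by (simp add: scat_op_def)
next
  case False
  then show ?thesis using M by (simp add: scat_op_def not_integrable_integral_eq)
qed


lemma step:
  fixes \<Omega> :: "'a::euclidean_space set" and \<sigma>s \<Sigma>a :: "'a \<Rightarrow> real" and \<Theta> g u :: "'a \<Rightarrow> 'a \<Rightarrow> real"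
  assumes op: "open \<Omega>" and cv: "convex \<Omega>" and sd: "smooth_domain \<Omega>" and R: "\<forall>z\<in>\<Omega>. norm z \<le> R"
    and sm: "\<sigma>s \<in> borel_measurable lborel" and sb: "AE x in lborel. x \<in> \<Omega> \<longrightarrow> slo \<le> \<sigma>s x \<and> \<sigma>s x \<le> shi"
    and am: "\<Sigma>a \<in> borel_measurable lborel" and ab: "AE x in lborel. x \<in> \<Omega> \<longrightarrow> alo \<le> \<Sigma>a x \<and> \<Sigma>a x \<le> ahi"
    and alo: "0 < alo" "alo \<le> ahi" and slo: "0 < slo" "slo \<le> shi" and h: "0 < h"
    and V: "AE v in sphere_measure. norm v = 1 \<and> (AE v' in sphere_measure. 0 \<le> \<Theta> v v') \<and> (\<integral>v'. \<Theta> v v' \<partial>sphere_measure) = 1"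
    and gl: "\<And>y v. (y, v) \<in> Gamma_minus \<Omega> \<Longrightarrow> gl \<le> g y v" and gl0: "0 < gl"
    and idn: "AE (x, v) in lborel \<Otimes>\<^sub>M sphere_measure. x \<in> \<Omega> \<longrightarrow>
        (let \<tau> = tau_minus \<Omega> x v;
             att = (\<lambda>t. exp (- (LINT s:{0..t}|lborel. \<Sigma>a (x - s *\<^sub>R v) + \<sigma>s (x - s *\<^sub>R v))))
         in u x v = att \<tau> * g (x - \<tau> *\<^sub>R v) v
               + (LINT t:{0..\<tau>}|lborel. att t * \<sigma>s (x - t *\<^sub>R v) * scat_op \<Theta> u (x - t *\<^sub>R v) v))"
    and M: "0 \<le> M" and hyp: "AE (x, v) in lborel \<Otimes>\<^sub>M sphere_measure. x \<in> \<Omega> \<longrightarrow> -M \<le> u x v"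
  shows "AE (x, v) in lborel \<Otimes>\<^sub>M sphere_measure. x \<in> \<Omega> \<longrightarrow>
           exp (-((ahi+shi)*(2*R))) * gl - M * (shi/(alo+shi)) * exp((ahi+shi)*h) \<le> u x v"
proof -
  interpret S: prob_space "sphere_measure::'a measure" by (rule prob_space_sphere)
  interpret PS: pair_sigma_finite "lborel::'a measure" "sphere_measure::'a measure" ..
  have sm'[measurable]: "\<sigma>s \<in> borel_measurable borel" using sm by simp
  have am'[measurable]: "\<Sigma>a \<in> borel_measurable borel" using am by simp
  have a: "AE x' in lborel. AE v' in sphere_measure. x' \<in> \<Omega> \<longrightarrow> -M \<le> u x' v'"
    using PS.AE_pair[OF hyp] by simp
  define Good where "Good x' \<longleftrightarrow> (x' \<in> \<Omega> \<longrightarrow> slo \<le> \<sigma>s x' \<and> \<sigma>s x' \<le> shi \<and> alo \<le> \<Sigma>a x' \<and> \<Sigma>a x' \<le> ahi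
      \<and> (AE v' in sphere_measure. -M \<le> u x' v'))" for x'
  have "AE x' in lborel. Good x'"
    using a sb ab
  proof eventually_elim
    case (elim x')
    show ?case unfolding Good_def
    proof
      assume x': "x' \<in> \<Omega>"
      have "AE v' in sphere_measure. -M \<le> u x' v'" using elim(1) x' by simp
      then show "slo \<le> \<sigma>s x' \<and> \<sigma>s x' \<le> shi \<and> alo \<le> \<Sigma>a x' \<and> \<Sigma>a x' \<le> ahi
        \<and> (AE v' in sphere_measure. -M \<le> u x' v')" using elim x' by simp
    qed
  qed
  then obtain N where N: "{x' \<in> space lborel. \<not> Good x'} \<subseteq> N" "emeasure lborel N = 0" "N \<in> sets lborel"
    by (rule AE_E)
  have Nn: "N \<in> null_sets lborel" using N by (simp add: null_sets_def)
  have L: "AE (x,v) in lborel \<Otimes>\<^sub>M (sphere_measure::'a measure). AE t in lborel. x - t *\<^sub>R v \<notin> N"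
    by (rule line_null[OF Nn])
  define Vp where "Vp v \<longleftrightarrow> norm v = 1 \<and> (AE v' in sphere_measure. 0 \<le> \<Theta> v v') \<and> (\<integral>v'. \<Theta> v v' \<partial>sphere_measure) = 1" for v
  obtain NV where NV: "{v \<in> space sphere_measure. \<not> Vp v} \<subseteq> NV" "emeasure sphere_measure NV = 0" "NV \<in> sets sphere_measure"
    using V unfolding Vp_def[symmetric] by (rule AE_E)
  have NVn: "NV \<in> null_sets sphere_measure" using NV by (simp add: null_sets_def)
  have V2: "AE p in lborel \<Otimes>\<^sub>M (sphere_measure::'a measure). Vp (snd p)"
  proof (rule AE_I')
    show "UNIV \<times> NV \<in> null_sets (lborel \<Otimes>\<^sub>M sphere_measure)"
      by (rule S.times_in_null_sets2) (use NVn in auto)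
    show "{p \<in> space (lborel \<Otimes>\<^sub>M sphere_measure). \<not> Vp (snd p)} \<subseteq> UNIV \<times> NV"
      using NV(1) by auto
  qed
  show ?thesis
    using idn L V2
  proof eventually_elim
    case (elim p)
    obtain x v where p: "p = (x, v)" by (cases p)
    have idn': "x \<in> \<Omega> \<Longrightarrow> u x v = exp (- (LINT s:{0..tau_minus \<Omega> x v}|lborel. \<Sigma>a (x - s *\<^sub>R v) + \<sigma>s (x - s *\<^sub>R v)))
                 * g (x - tau_minus \<Omega> x v *\<^sub>R v) v
          + (LINT t:{0..tau_minus \<Omega> x v}|lborel. exp (- (LINT s:{0..t}|lborel. \<Sigma>a (x - s *\<^sub>R v) + \<sigma>s (x - s *\<^sub>R v)))
                 * \<sigma>s (x - t *\<^sub>R v) * scat_op \<Theta> u (x - t *\<^sub>R v) v)"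
      using elim(1) by (simp add: p Let_def)
    have Lx: "AE t in lborel. x - t *\<^sub>R v \<notin> N" using elim(2) by (simp add: p)
    have Vx: "Vp v" using elim(3) by (simp add: p)
    then have v1: "norm v = 1" and th0: "AE v' in sphere_measure. 0 \<le> \<Theta> v v'"
      and th1: "(\<integral>v'. \<Theta> v v' \<partial>sphere_measure) = 1" by (auto simp: Vp_def)
    show ?case unfolding p prod.case
    proof (intro impI)
      assume x: "x \<in> \<Omega>"
      define \<tau> where "\<tau> = tau_minus \<Omega> x v"
      note TF = tau_facts[OF op cv R x v1, folded \<tau>_def]
      have gy: "gl \<le> g (x - \<tau> *\<^sub>R v) v" using gamma_in[OF op cv sd x v1 TF(4) TF(1)] by (rule gl)
      have bt: "AE t in lborel. t \<in> {0..\<tau>} \<longrightarrow> alo \<le> \<Sigma>a (x - t *\<^sub>R v) \<and> \<Sigma>a (x - t *\<^sub>R v) \<le> ahi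
          \<and> 0 \<le> \<sigma>s (x - t *\<^sub>R v) \<and> \<sigma>s (x - t *\<^sub>R v) \<le> shi \<and> -M \<le> scat_op \<Theta> u (x - t *\<^sub>R v) v"
        using Lx AE_lborel_singleton[of \<tau>]
      proof eventually_elim
        case (elim t)
        show ?case
        proof
          assume t: "t \<in> {0..\<tau>}"
          then have xt: "x - t *\<^sub>R v \<in> \<Omega>" using TF(3) elim(2) by auto
          have "Good (x - t *\<^sub>R v)" using N(1) elim(1) by auto
          then have G: "slo \<le> \<sigma>s (x - t *\<^sub>R v) \<and> \<sigma>s (x - t *\<^sub>R v) \<le> shi \<and> alo \<le> \<Sigma>a (x - t *\<^sub>R v)
             \<and> \<Sigma>a (x - t *\<^sub>R v) \<le> ahi \<and> (AE v' in sphere_measure. -M \<le> u (x - t *\<^sub>R v) v')"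
            using xt by (simp add: Good_def)
          have "-M \<le> scat_op \<Theta> u (x - t *\<^sub>R v) v" using scat_lb[where \<Theta>=\<Theta> and u=u and v=v and x'="x - t *\<^sub>R v", OF th0 th1 _ M] G by blast
          then show "alo \<le> \<Sigma>a (x - t *\<^sub>R v) \<and> \<Sigma>a (x - t *\<^sub>R v) \<le> ahi
            \<and> 0 \<le> \<sigma>s (x - t *\<^sub>R v) \<and> \<sigma>s (x - t *\<^sub>R v) \<le> shi \<and> -M \<le> scat_op \<Theta> u (x - t *\<^sub>R v) v"
            using G slo by auto
        qed
      qed
      have m1: "(\<lambda>t. \<Sigma>a (x - t *\<^sub>R v)) \<in> borel_measurable borel" by measurable
      have m2: "(\<lambda>t. \<sigma>s (x - t *\<^sub>R v)) \<in> borel_measurable borel" by measurable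
      have tau0: "0 \<le> \<tau>" using TF(1) by simp
      have shi0: "0 \<le> shi" "0 \<le> ahi" using slo alo by auto
      note LB = line_bound[OF m1 m2 tau0 h alo(1) M shi0 bt]
      define A where "A = exp (- (LINT s:{0..\<tau>}|lborel. \<Sigma>a (x - s *\<^sub>R v) + \<sigma>s (x - s *\<^sub>R v)))"
      have "exp (-((ahi+shi)*(2*R))) \<le> exp (-((ahi+shi)*\<tau>))"
        using TF(2) shi0 slo by (simp add: mult_left_mono)
      also have "\<dots> \<le> A" using LB(2) by (simp add: A_def)
      finally have eA: "exp (-((ahi+shi)*(2*R))) \<le> A" .
      have "exp (-((ahi+shi)*(2*R))) * gl \<le> A * g (x - \<tau> *\<^sub>R v) v"
        using eA gy gl0 by (intro mult_mono) (auto simp: A_def)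
      then show "exp (-((ahi+shi)*(2*R))) * gl - M * (shi/(alo+shi)) * exp((ahi+shi)*h) \<le> u x v"
        using idn'[OF x] LB(1) unfolding \<tau>_def[symmetric] A_def[symmetric] by linarith
    qed
  qed
qed


theorem lemma2p1:
  fixes \<Omega> :: "'a::euclidean_space set"
    and \<sigma>s \<Sigma>a :: "'a \<Rightarrow> real"
    and \<Theta> g u :: "'a \<Rightarrow> 'a \<Rightarrow> real"
  assumes dim: "DIM('a) \<ge> 2"
    and dom: "open \<Omega>" "\<Omega> \<noteq> {}" "bounded \<Omega>" "convex \<Omega>" "smooth_domain \<Omega>"
    and sig: "\<exists>lo hi. in_F lborel \<Omega> lo hi \<sigma>s"
    and Th: "\<exists>lo hi. in_F (sphere_measure \<Otimes>\<^sub>M sphere_measure) (sphere 0 1 \<times> sphere 0 1) lo hi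
                        (\<lambda>(v, v'). \<Theta> v v')"
    and Th_sym: "AE (v, v') in sphere_measure \<Otimes>\<^sub>M sphere_measure. \<Theta> v v' = \<Theta> v' v"
    and Th_norm1: "AE v in sphere_measure. (\<integral>v'. \<Theta> v v' \<partial>sphere_measure) = 1"
    and Th_norm2: "AE v' in sphere_measure. (\<integral>v. \<Theta> v v' \<partial>sphere_measure) = 1"
    and g_meas: "(\<lambda>(y, v). g y v) \<in> borel_measurable borel"
    and g_bdd: "\<exists>B. \<forall>(y, v) \<in> Gamma_minus \<Omega>. \<bar>g y v\<bar> \<le> B"
    and g_pos: "(INF (y, v) \<in> Gamma_minus \<Omega>. g y v) > 0"
    and Sa: "\<exists>lo hi. in_F lborel \<Omega> lo hi \<Sigma>a"
    and sol: "is_transport_solution \<Omega> \<Sigma>a \<sigma>s \<Theta> g u"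
  shows "\<exists>c>0. AE (x, v) in lborel \<Otimes>\<^sub>M sphere_measure. x \<in> \<Omega> \<longrightarrow> u x v \<ge> c"
proof -
  interpret S: prob_space "sphere_measure::'a measure" by (rule prob_space_sphere)
  interpret SS: pair_sigma_finite "sphere_measure::'a measure" "sphere_measure::'a measure" ..
  from sig obtain slo shi where sF: "in_F lborel \<Omega> slo shi \<sigma>s" by blast
  then have slo: "0 < slo" "slo \<le> shi" and sm: "\<sigma>s \<in> borel_measurable lborel"
    and sb: "AE x in lborel. x \<in> \<Omega> \<longrightarrow> slo \<le> \<sigma>s x \<and> \<sigma>s x \<le> shi" by (auto simp: in_F_def)
  from Sa obtain alo ahi where aF: "in_F lborel \<Omega> alo ahi \<Sigma>a" by blast
  then have alo: "0 < alo" "alo \<le> ahi" and am: "\<Sigma>a \<in> borel_measurable lborel"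
    and ab: "AE x in lborel. x \<in> \<Omega> \<longrightarrow> alo \<le> \<Sigma>a x \<and> \<Sigma>a x \<le> ahi" by (auto simp: in_F_def)
  from Th obtain tlo thi where tF: "in_F (sphere_measure \<Otimes>\<^sub>M sphere_measure) (sphere 0 1 \<times> sphere 0 1) tlo thi
                        (\<lambda>(v, v'). \<Theta> v v')" by blast
  then have tlo: "0 < tlo" and tb: "AE p in sphere_measure \<Otimes>\<^sub>M sphere_measure. p \<in> sphere 0 1 \<times> sphere 0 1 \<longrightarrow>
      tlo \<le> (case p of (v, v') \<Rightarrow> \<Theta> v v') \<and> (case p of (v, v') \<Rightarrow> \<Theta> v v') \<le> thi"
    by (auto simp: in_F_def)
  have tb2: "AE v in sphere_measure. AE v' in sphere_measure. norm v = 1 \<and> norm v' = 1 \<longrightarrow> tlo \<le> \<Theta> v v' \<and> \<Theta> v v' \<le> thi"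
    using SS.AE_pair[OF tb] by simp
  have V: "AE v in sphere_measure. norm v = 1 \<and> (AE v' in sphere_measure. 0 \<le> \<Theta> v v') \<and> (\<integral>v'. \<Theta> v v' \<partial>sphere_measure) = 1"
    using tb2 AE_sphere Th_norm1
  proof eventually_elim
    case (elim v)
    have "AE v' in sphere_measure. 0 \<le> \<Theta> v v'"
      using elim(1) AE_sphere by eventually_elim (use elim(2) tlo in auto)
    then show ?case using elim by simp
  qed
  from g_bdd obtain Bg where Bg: "\<forall>(y, v) \<in> Gamma_minus \<Omega>. \<bar>g y v\<bar> \<le> Bg" by blast
  define gl where "gl = (INF (y, v) \<in> Gamma_minus \<Omega>. g y v)"
  have gl0: "0 < gl" using g_pos by (simp add: gl_def)
  have gl: "gl \<le> g y v" if "(y, v) \<in> Gamma_minus \<Omega>" for y v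
  proof -
    have "bdd_below ((\<lambda>(y, v). g y v) ` Gamma_minus \<Omega>)"
      unfolding bdd_below_def using Bg by (intro exI[of _ "- Bg"]) force
    then show ?thesis unfolding gl_def using cINF_lower[OF _ that, of "\<lambda>(y, v). g y v"] by simp
  qed
  obtain R where R: "R > 0" "\<forall>z\<in>\<Omega>. norm z \<le> R" using dom(3) by (auto simp: bounded_pos)
  define C where "C = ahi + shi"
  define q where "q = shi / (alo + shi)"
  have C: "0 < C" using alo slo by (simp add: C_def)
  have q: "0 < q" "q < 1" using alo slo by (auto simp: q_def)
  define h where "h = ln (2 / (1 + q)) / C"
  have h: "0 < h" using q C by (simp add: h_def)
  have eCh: "exp (C * h) = 2 / (1 + q)" using q C by (simp add: h_def)
  define q1 where "q1 = 2 * q / (1 + q)"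
  have q1: "0 < q1" "q1 < 1" using q by (auto simp: q1_def field_simps)
  have qq1: "q * exp (C * h) = q1" using eCh by (simp add: q1_def)
  define c0 where "c0 = exp (-(C*(2*R))) * gl"
  have c0: "0 < c0" using gl0 by (simp add: c0_def)
  obtain B where um: "(\<lambda>(x, v). u x v) \<in> borel_measurable (lborel \<Otimes>\<^sub>M sphere_measure)"
    and uB: "AE (x, v) in lborel \<Otimes>\<^sub>M sphere_measure. x \<in> \<Omega> \<longrightarrow> \<bar>u x v\<bar> \<le> B"
    and idn: "AE (x, v) in lborel \<Otimes>\<^sub>M sphere_measure. x \<in> \<Omega> \<longrightarrow>
        (let \<tau> = tau_minus \<Omega> x v;
             att = (\<lambda>t. exp (- (LINT s:{0..t}|lborel. \<Sigma>a (x - s *\<^sub>R v) + \<sigma>s (x - s *\<^sub>R v))))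
         in u x v = att \<tau> * g (x - \<tau> *\<^sub>R v) v
               + (LINT t:{0..\<tau>}|lborel. att t * \<sigma>s (x - t *\<^sub>R v) * scat_op \<Theta> u (x - t *\<^sub>R v) v))"
    using sol unfolding is_transport_solution_def by blast
  have stp: "AE (x, v) in lborel \<Otimes>\<^sub>M sphere_measure. x \<in> \<Omega> \<longrightarrow> c0 - M * q1 \<le> u x v"
    if M: "0 \<le> M" and hyp: "AE (x, v) in lborel \<Otimes>\<^sub>M sphere_measure. x \<in> \<Omega> \<longrightarrow> -M \<le> u x v" for M
  proof -
    have "AE (x, v) in lborel \<Otimes>\<^sub>M sphere_measure. x \<in> \<Omega> \<longrightarrow>
           exp (-((ahi+shi)*(2*R))) * gl - M * (shi/(alo+shi)) * exp((ahi+shi)*h) \<le> u x v"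
      by (rule step[OF dom(1) dom(4) dom(5) R(2) sm sb am ab alo slo h V gl gl0 idn M hyp])
    moreover have "exp (-((ahi+shi)*(2*R))) * gl - M * (shi/(alo+shi)) * exp((ahi+shi)*h) = c0 - M * q1"
    proof -
      have "M * (shi/(alo+shi)) * exp((ahi+shi)*h) = M * (q * exp (C * h))"
        by (simp add: q_def C_def)
      then show ?thesis using qq1 by (simp add: c0_def C_def)
    qed
    ultimately show ?thesis by simp
  qed
  define B0 where "B0 = max B 0"
  have B0: "0 \<le> B0" by (simp add: B0_def)
  have iter: "AE (x, v) in lborel \<Otimes>\<^sub>M sphere_measure. x \<in> \<Omega> \<longrightarrow> - (q1 ^ k * B0) \<le> u x v" for k
  proof (induction k)
    case 0
    show ?case using uB by (rule AE_mp, intro AE_I2) (auto simp: B0_def)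
  next
    case (Suc k)
    have "AE (x, v) in lborel \<Otimes>\<^sub>M sphere_measure. x \<in> \<Omega> \<longrightarrow> c0 - (q1 ^ k * B0) * q1 \<le> u x v"
      by (rule stp[OF _ Suc.IH]) (use q1 B0 in simp)
    then show ?case by (rule AE_mp, intro AE_I2) (use c0 in \<open>auto simp: mult_ac\<close>)
  qed
  obtain n where n: "q1 ^ n < c0 / (2 * (B0 + 1))" using real_arch_pow_inv[OF _ q1(2), of "c0 / (2 * (B0 + 1))"] c0 B0 by auto
  have fin: "AE (x, v) in lborel \<Otimes>\<^sub>M sphere_measure. x \<in> \<Omega> \<longrightarrow> c0 - (q1 ^ n * B0) * q1 \<le> u x v"
    by (rule stp[OF _ iter[of n]]) (use q1 B0 in simp)
  have small: "(q1 ^ n * B0) * q1 \<le> c0 / 2"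
  proof -
    have "(q1 ^ n * B0) * q1 \<le> q1 ^ n * B0" using q1 B0 by (simp add: mult_left_le)
    also have "\<dots> \<le> c0 / (2 * (B0 + 1)) * B0" using n B0 by (intro mult_right_mono) auto
    also have "\<dots> \<le> c0 / 2"
      using c0 B0 by (simp add: field_simps)
    finally show ?thesis .
  qed
  have "AE (x, v) in lborel \<Otimes>\<^sub>M sphere_measure. x \<in> \<Omega> \<longrightarrow> u x v \<ge> c0 / 2"
    using fin by (rule AE_mp, intro AE_I2) (use small in auto)
  then show ?thesis using c0 by (intro exI[of _ "c0/2"]) auto
qed


end
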